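(* Let $G$ be a discrete group that contains an amenable normalish subgroup. Then for every coefficient $G$-module $(\pi,E)$ with $E$ mixing and every $n\ge 0$, the bounded cohomology group $H_b^n(G,E)$ is trivial.
   Context: A subgroup $H<G$ is normalish if for every $n\ge1$ and $t_1,\dots,t_n\in G$ the intersection $\bigcap_i t_iHt_i^{-1}$ is infinite. A coefficient $G$-module $(\pi,E)$ is an isometric linear representation $\pi$ of $G$ on a Banach space $E$ which is the dual of a separable Banach space, such that each $\pi(s)$ is weak*-continuous. $E$ is mixing if for every $x\in E\setminus\{0\}$ the stabilizer $\{s\in G:\pi(s)x=x\}$ is finite. The bounded cohomology $H_b^n(G,E)$ is the $n$-th cohomology of the complex $0\to\ell^\infty(G,E)^G\to\ell^\infty(G^2,E)^G\to\cdots$ of bounded $G$-equivariant functions with the standard homogeneous coboundary maps. *)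

theory Defs
  imports "HOL-Analysis.Analysis" "HOL-Algebra.Group"
begin

definition normalish :: "('g, 'b) monoid_scheme \<Rightarrow> 'g set \<Rightarrow> bool" where
  "normalish G H \<longleftrightarrow> subgroup H G \<and>
     (\<forall>T. finite T \<and> T \<noteq> {} \<and> T \<subseteq> carrier G \<longrightarrow>
        infinite (\<Inter>t\<in>T. (\<lambda>h. t \<otimes>\<^bsub>G\<^esub> h \<otimes>\<^bsub>G\<^esub> inv\<^bsub>G\<^esub> t) ` H))"

definition bdd_on :: "'g set \<Rightarrow> ('g \<Rightarrow> real) \<Rightarrow> bool" where
  "bdd_on A f \<longleftrightarrow> (\<exists>B. \<forall>x\<in>A. \<bar>f x\<bar> \<le> B)"

definition amenable_subgroup :: "('g, 'b) monoid_scheme \<Rightarrow> 'g set \<Rightarrow> bool" where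
  "amenable_subgroup G H \<longleftrightarrow> subgroup H G \<and>
     (\<exists>m :: ('g \<Rightarrow> real) \<Rightarrow> real.
        (\<forall>f f'. (\<forall>x\<in>H. f x = f' x) \<longrightarrow> m f = m f') \<and>
        (\<forall>f g a b. bdd_on H f \<and> bdd_on H g \<longrightarrow>
            m (\<lambda>x. a * f x + b * g x) = a * m f + b * m g) \<and>
        (\<forall>f. bdd_on H f \<and> (\<forall>x\<in>H. f x \<ge> 0) \<longrightarrow> m f \<ge> 0) \<and>
        m (\<lambda>_. 1) = 1 \<and>
        (\<forall>f h. bdd_on H f \<and> h \<in> H \<longrightarrow> m (\<lambda>x. f (h \<otimes>\<^bsub>G\<^esub> x)) = m f))"

text \<open>The weak-* topology on the dual space of 'f (the space of bounded linear
  functionals 'f \<Rightarrow>L real): the coarsest topology making all evaluations continuous.\<close>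
definition weak_star_topology :: "('f::real_normed_vector \<Rightarrow>\<^sub>L real) topology" where
  "weak_star_topology =
     pullback_topology UNIV blinfun_apply (product_topology (\<lambda>_. euclidean) UNIV)"

text \<open>A coefficient G-module: an isometric linear representation of G on the dual
  E = 'f \<Rightarrow>L real of a separable Banach space 'f, by weak-*-continuous operators.\<close>
definition coefficient_module ::
  "('g, 'b) monoid_scheme \<Rightarrow> ('g \<Rightarrow> ('f::banach \<Rightarrow>\<^sub>L real) \<Rightarrow> ('f \<Rightarrow>\<^sub>L real)) \<Rightarrow> bool" where
  "coefficient_module G \<pi> \<longleftrightarrow>
     separable_space (euclidean :: 'f topology) \<and>
     (\<forall>s\<in>carrier G. linear (\<pi> s) \<and> (\<forall>x. norm (\<pi> s x) = norm x) \<and>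
        continuous_map weak_star_topology weak_star_topology (\<pi> s)) \<and>
     \<pi> \<one>\<^bsub>G\<^esub> = id \<and>
     (\<forall>s\<in>carrier G. \<forall>t\<in>carrier G. \<pi> (s \<otimes>\<^bsub>G\<^esub> t) = \<pi> s \<circ> \<pi> t)"

definition mixing ::
  "('g, 'b) monoid_scheme \<Rightarrow> ('g \<Rightarrow> 'e::zero \<Rightarrow> 'e) \<Rightarrow> bool" where
  "mixing G \<pi> \<longleftrightarrow> (\<forall>x. x \<noteq> 0 \<longrightarrow> finite {s\<in>carrier G. \<pi> s x = x})"

text \<open>Points of G^(k) are represented as lists of length k of elements of G.\<close>
definition tuples :: "('g, 'b) monoid_scheme \<Rightarrow> nat \<Rightarrow> 'g list set" where
  "tuples G k = {xs. length xs = k \<and> set xs \<subseteq> carrier G}"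

text \<open>Degree-n cochains: bounded G-equivariant functions on G^(n+1), i.e. elements of
  ell-infinity(G^(n+1),E)^G (only values on tuples G (n+1) matter).\<close>
definition bcochain ::
  "('g, 'b) monoid_scheme \<Rightarrow> ('g \<Rightarrow> 'e::real_normed_vector \<Rightarrow> 'e) \<Rightarrow> nat \<Rightarrow> ('g list \<Rightarrow> 'e) \<Rightarrow> bool" where
  "bcochain G \<pi> n f \<longleftrightarrow>
     (\<exists>B. \<forall>xs\<in>tuples G (Suc n). norm (f xs) \<le> B) \<and>
     (\<forall>g\<in>carrier G. \<forall>xs\<in>tuples G (Suc n). f (map (\<lambda>x. g \<otimes>\<^bsub>G\<^esub> x) xs) = \<pi> g (f xs))"

definition coboundary :: "('g list \<Rightarrow> 'e::real_vector) \<Rightarrow> 'g list \<Rightarrow> 'e" where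
  "coboundary f xs = (\<Sum>i<length xs. ((-1::real) ^ i) *\<^sub>R f (take i xs @ drop (Suc i) xs))"

text \<open>H_b^n(G,E) = 0: every n-cocycle is a coboundary of an (n-1)-cochain
  (for n = 0: every 0-cocycle vanishes, as the complex starts with 0).\<close>
definition bounded_cohomology_trivial ::
  "('g, 'b) monoid_scheme \<Rightarrow> ('g \<Rightarrow> 'e::real_normed_vector \<Rightarrow> 'e) \<Rightarrow> nat \<Rightarrow> bool" where
  "bounded_cohomology_trivial G \<pi> n \<longleftrightarrow>
     (\<forall>f. bcochain G \<pi> n f \<and> (\<forall>xs\<in>tuples G (Suc (Suc n)). coboundary f xs = 0) \<longrightarrow>
        (if n = 0 then (\<forall>xs\<in>tuples G 1. f xs = 0)
         else (\<exists>h. bcochain G \<pi> (n - 1) h \<and>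
                   (\<forall>xs\<in>tuples G (Suc n). f xs = coboundary h xs))))"

end

theory Submission
  imports Defs
begin


lemma ker_eval:
  fixes \<phi> :: "('f::real_normed_vector \<Rightarrow>\<^sub>L real) \<Rightarrow> real"
  assumes "finite I" "linear \<phi>" "\<forall>y. (\<forall>w\<in>I. blinfun_apply y w = 0) \<longrightarrow> \<phi> y = 0"
  shows "\<exists>u. \<forall>y. \<phi> y = blinfun_apply y u"
  using assms
proof (induction I arbitrary: \<phi> rule: finite_induct)
  case empty
  then show ?case by (intro exI[of _ 0]) simp
next
  case (insert a I)
  show ?case
  proof (cases "\<exists>y0::('f \<Rightarrow>\<^sub>L real). (\<forall>w\<in>I. blinfun_apply y0 w = 0) \<and> blinfun_apply y0 a \<noteq> 0")
    case True
    then obtain y0 :: "'f \<Rightarrow>\<^sub>L real" where y0: "\<forall>w\<in>I. blinfun_apply y0 w = 0" "blinfun_apply y0 a \<noteq> 0" by blast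
    define c where "c = \<phi> y0 / blinfun_apply y0 a"
    define \<psi> where "\<psi> = (\<lambda>y. \<phi> y - c * blinfun_apply y a)"
    have lin: "linear \<psi>"
      using insert.prems(1) unfolding \<psi>_def linear_iff
      by (simp add: blinfun.add_left blinfun.scaleR_left algebra_simps)
    have ker: "\<forall>y. (\<forall>w\<in>I. blinfun_apply y w = 0) \<longrightarrow> \<psi> y = 0"
    proof (intro allI impI)
      fix y :: "'f \<Rightarrow>\<^sub>L real" assume yI: "\<forall>w\<in>I. blinfun_apply y w = 0"
      define z where "z = y - (blinfun_apply y a / blinfun_apply y0 a) *\<^sub>R y0"
      have "\<forall>w\<in>insert a I. blinfun_apply z w = 0"
        using yI y0 by (simp add: z_def blinfun.diff_left blinfun.scaleR_left)
      hence "\<phi> z = 0" using insert.prems(2) by blast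
      moreover have "\<phi> z = \<phi> y - (blinfun_apply y a / blinfun_apply y0 a) * \<phi> y0"
        unfolding z_def using insert.prems(1) by (simp add: linear_diff linear_cmul)
      ultimately show "\<psi> y = 0" unfolding \<psi>_def c_def by (simp add: field_simps)
    qed
    obtain u where u: "\<forall>y. \<psi> y = blinfun_apply y u" using insert.IH[OF lin ker] by blast
    show ?thesis
      by (intro exI[of _ "u + c *\<^sub>R a"]) (use u in \<open>simp add: \<psi>_def blinfun.add_right blinfun.scaleR_right algebra_simps\<close>)
  next
    case False
    have "\<forall>y. (\<forall>w\<in>I. blinfun_apply y w = 0) \<longrightarrow> \<phi> y = 0"
      using False insert.prems(2) by auto
    then show ?thesis using insert.IH[OF insert.prems(1)] by blast
  qed
qed

lemma eval_cont: "continuous_map weak_star_topology euclidean (\<lambda>y. blinfun_apply y v)"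
proof -
  have "continuous_map weak_star_topology euclidean ((\<lambda>f. f v) \<circ> blinfun_apply)"
    unfolding weak_star_topology_def
    by (rule continuous_map_pullback) (rule continuous_map_product_projection, simp)
  then show ?thesis by (simp add: comp_def)
qed

lemma predual:
  fixes T :: "('f::real_normed_vector \<Rightarrow>\<^sub>L real) \<Rightarrow> ('f \<Rightarrow>\<^sub>L real)"
  assumes lin: "linear T" and cont: "continuous_map weak_star_topology weak_star_topology T"
  shows "\<exists>u. \<forall>y. blinfun_apply (T y) v = blinfun_apply y u"
proof -
  define \<phi> where "\<phi> = (\<lambda>y. blinfun_apply (T y) v)"
  have linp: "linear \<phi>" using lin unfolding \<phi>_def linear_iff
    by (simp add: blinfun.add_left blinfun.scaleR_left)
  have cp: "continuous_map weak_star_topology euclidean \<phi>"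
    unfolding \<phi>_def using continuous_map_compose[OF cont eval_cont[of v]] by (simp add: comp_def)
  have top: "topspace (weak_star_topology :: ('f \<Rightarrow>\<^sub>L real) topology) = UNIV"
    by (simp add: weak_star_topology_def topspace_pullback_topology)
  have "openin weak_star_topology {y. \<phi> y \<in> {-1<..<1}}"
    using openin_continuous_map_preimage[OF cp, of "{-1<..<1}"] top by simp
  then obtain U where U: "openin (product_topology (\<lambda>_. euclidean) UNIV) U"
       "{y. \<phi> y \<in> {-1<..<1}} = blinfun_apply -` U"
    unfolding weak_star_topology_def openin_pullback_topology by auto
  have "\<phi> 0 = 0" using linp by (simp add: linear_0)
  hence "blinfun_apply 0 \<in> U" using U(2) by auto
  then obtain X where X: "blinfun_apply 0 \<in> (\<Pi>\<^sub>E i\<in>UNIV. X i)" "\<And>i. openin euclidean (X i)"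
     "finite {i. X i \<noteq> topspace euclidean}" "(\<Pi>\<^sub>E i\<in>UNIV. X i) \<subseteq> U"
    using product_topology_open_contains_basis[OF U(1)] by blast
  define I where "I = {i. X i \<noteq> UNIV}"
  have fI: "finite I" using X(3) by (simp add: I_def)
  have ker: "\<forall>y. (\<forall>w\<in>I. blinfun_apply y w = 0) \<longrightarrow> \<phi> y = 0"
  proof (intro allI impI)
    fix y :: "'f \<Rightarrow>\<^sub>L real" assume yI: "\<forall>w\<in>I. blinfun_apply y w = 0"
    have small: "\<bar>t * \<phi> y\<bar> < 1" for t
    proof -
      have "t * blinfun_apply y i \<in> X i" for i
      proof (cases "i \<in> I")
        case True then show ?thesis using yI X(1)[unfolded PiE_def] by (auto simp: Pi_def)
      next
        case False then show ?thesis by (simp add: I_def)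
      qed
      hence "blinfun_apply (t *\<^sub>R y) \<in> (\<Pi>\<^sub>E i\<in>UNIV. X i)" by (simp add: PiE_def Pi_def blinfun.scaleR_left)
      hence "t *\<^sub>R y \<in> {y. \<phi> y \<in> {-1<..<1}}" using X(4) U(2) by blast
      thus ?thesis using linp by (simp add: linear_cmul abs_less_iff)
    qed
    show "\<phi> y = 0"
    proof (rule ccontr)
      assume "\<phi> y \<noteq> 0"
      then have "\<bar>(1 / \<phi> y) * \<phi> y\<bar> = 1" by simp
      with small[of "1 / \<phi> y"] show False by simp
    qed
  qed
  from ker_eval[OF fI linp ker] show ?thesis unfolding \<phi>_def .
qed




definition del :: "nat \<Rightarrow> 'a list \<Rightarrow> 'a list" where
  "del i xs = take i xs @ drop (Suc i) xs"

lemma del_Cons0: "del 0 (h # hs) = hs" by (simp add: del_def)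
lemma del_ConsS: "del (Suc i) (h # hs) = h # del i hs" by (simp add: del_def)

locale amen =
  fixes G :: "('g,'b) monoid_scheme" and H :: "'g set" and m :: "('g \<Rightarrow> real) \<Rightarrow> real"
  assumes grp: "group G" and sub: "subgroup H G"
   and mc: "\<And>f f'. (\<forall>x\<in>H. f x = f' x) \<Longrightarrow> m f = m f'"
   and ml: "\<And>f g a b. bdd_on H f \<Longrightarrow> bdd_on H g \<Longrightarrow> m (\<lambda>x. a * f x + b * g x) = a * m f + b * m g"
   and mp: "\<And>f. bdd_on H f \<Longrightarrow> (\<forall>x\<in>H. f x \<ge> 0) \<Longrightarrow> m f \<ge> 0"
   and m1: "m (\<lambda>_. 1) = 1"
   and mi: "\<And>f h. bdd_on H f \<Longrightarrow> h \<in> H \<Longrightarrow> m (\<lambda>x. f (h \<otimes>\<^bsub>G\<^esub> x)) = m f"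
begin

lemma bdd_const: "bdd_on H (\<lambda>_. c)" unfolding bdd_on_def by blast

lemma m_const: "m (\<lambda>_. c) = c"
proof -
  have "m (\<lambda>x. c * 1 + 0 * 1) = c * m (\<lambda>_. 1) + 0 * m (\<lambda>_. 1)"
    by (rule ml) (simp_all add: bdd_const)
  then show ?thesis using m1 by simp
qed

lemma m_add: "bdd_on H f \<Longrightarrow> bdd_on H g \<Longrightarrow> m (\<lambda>x. f x + g x) = m f + m g"
  using ml[of f g 1 1] by simp

lemma m_scale: "bdd_on H f \<Longrightarrow> m (\<lambda>x. a * f x) = a * m f"
  using ml[of f f a 0] by simp

lemma m_abs:
  assumes "\<forall>x\<in>H. \<bar>f x\<bar> \<le> B"
  shows "\<bar>m f\<bar> \<le> B"
proof -
  have bf: "bdd_on H f" using assms unfolding bdd_on_def by blast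
  have "m (\<lambda>x. B * 1 + (-1) * f x) \<ge> 0"
    by (rule mp) (use assms bf in \<open>auto simp: bdd_on_def abs_le_iff intro!: exI[of _ "2 * \<bar>B\<bar>"]\<close>)
  moreover have "m (\<lambda>x. B * 1 + (-1) * f x) = B * m (\<lambda>_. 1) + (-1) * m f"
    by (rule ml) (simp_all add: bdd_const bf)
  moreover have "m (\<lambda>x. B * 1 + 1 * f x) \<ge> 0"
    by (rule mp) (use assms bf in \<open>auto simp: bdd_on_def abs_le_iff intro!: exI[of _ "2 * \<bar>B\<bar>"]\<close>)
  moreover have "m (\<lambda>x. B * 1 + 1 * f x) = B * m (\<lambda>_. 1) + 1 * m f"
    by (rule ml) (simp_all add: bdd_const bf)
  ultimately show ?thesis using m1 by (auto simp: abs_le_iff)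
qed


definition mnE :: "('g \<Rightarrow> ('f::real_normed_vector \<Rightarrow>\<^sub>L real)) \<Rightarrow> ('f \<Rightarrow>\<^sub>L real)" where
  "mnE F = Blinfun (\<lambda>v. m (\<lambda>h. blinfun_apply (F h) v))"

lemma one_in_H: "\<one>\<^bsub>G\<^esub> \<in> H" using sub by (rule subgroup.one_closed)

lemma mnE_apply:
  fixes F :: "'g \<Rightarrow> ('f::real_normed_vector \<Rightarrow>\<^sub>L real)"
  assumes B: "\<forall>h\<in>H. norm (F h) \<le> B"
  shows "blinfun_apply (mnE F) v = m (\<lambda>h. blinfun_apply (F h) v)"
proof -
  have bd: "bdd_on H (\<lambda>h. blinfun_apply (F h) u)" for u
    unfolding bdd_on_def
  proof (intro exI ballI)
    fix h assume "h \<in> H"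
    have "\<bar>blinfun_apply (F h) u\<bar> \<le> norm (F h) * norm u" using norm_blinfun[of "F h" u] by simp
    also have "\<dots> \<le> B * norm u" using B \<open>h \<in> H\<close> by (simp add: mult_right_mono)
    finally show "\<bar>blinfun_apply (F h) u\<bar> \<le> B * norm u" .
  qed
  have "bounded_linear (\<lambda>v. m (\<lambda>h. blinfun_apply (F h) v))"
  proof (rule bounded_linear_intro[where K=B])
    fix x y show "m (\<lambda>h. blinfun_apply (F h) (x + y)) = m (\<lambda>h. blinfun_apply (F h) x) + m (\<lambda>h. blinfun_apply (F h) y)"
      using m_add[OF bd[of x] bd[of y]] by (simp add: blinfun.add_right)
  next
    fix r x show "m (\<lambda>h. blinfun_apply (F h) (r *\<^sub>R x)) = r *\<^sub>R m (\<lambda>h. blinfun_apply (F h) x)"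
      using m_scale[OF bd[of x], of r] by (simp add: blinfun.scaleR_right)
  next
    fix x
    have "\<forall>h\<in>H. \<bar>blinfun_apply (F h) x\<bar> \<le> B * norm x"
    proof
      fix h assume "h \<in> H"
      have "\<bar>blinfun_apply (F h) x\<bar> \<le> norm (F h) * norm x" using norm_blinfun[of "F h" x] by simp
      also have "\<dots> \<le> B * norm x" using B \<open>h \<in> H\<close> by (simp add: mult_right_mono)
      finally show "\<bar>blinfun_apply (F h) x\<bar> \<le> B * norm x" .
    qed
    from m_abs[OF this] show "norm (m (\<lambda>h. blinfun_apply (F h) x)) \<le> norm x * B" by (simp add: mult.commute)
  qed
  then show ?thesis unfolding mnE_def by (simp add: bounded_linear_Blinfun_apply)
qed

lemma mnE_norm:
  fixes F :: "'g \<Rightarrow> ('f::real_normed_vector \<Rightarrow>\<^sub>L real)"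
  assumes B: "\<forall>h\<in>H. norm (F h) \<le> B"
  shows "norm (mnE F) \<le> B"
proof (rule norm_blinfun_bound)
  show "0 \<le> B" using B one_in_H norm_ge_zero order_trans by blast
  fix x
  have "\<forall>h\<in>H. \<bar>blinfun_apply (F h) x\<bar> \<le> B * norm x"
  proof
    fix h assume "h \<in> H"
    have "\<bar>blinfun_apply (F h) x\<bar> \<le> norm (F h) * norm x" using norm_blinfun[of "F h" x] by simp
    also have "\<dots> \<le> B * norm x" using B \<open>h \<in> H\<close> by (simp add: mult_right_mono)
    finally show "\<bar>blinfun_apply (F h) x\<bar> \<le> B * norm x" .
  qed
  from m_abs[OF this] show "norm (blinfun_apply (mnE F) x) \<le> B * norm x"
    by (simp add: mnE_apply[OF B])
qed

lemma bdd_ev: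
  fixes F :: "'g \<Rightarrow> ('f::real_normed_vector \<Rightarrow>\<^sub>L real)"
  assumes B: "\<forall>h\<in>H. norm (F h) \<le> B"
  shows "bdd_on H (\<lambda>h. blinfun_apply (F h) v)"
  unfolding bdd_on_def
proof (intro exI ballI)
  fix h assume "h \<in> H"
  have "\<bar>blinfun_apply (F h) v\<bar> \<le> norm (F h) * norm v" using norm_blinfun[of "F h" v] by simp
  also have "\<dots> \<le> B * norm v" using B \<open>h \<in> H\<close> by (simp add: mult_right_mono)
  finally show "\<bar>blinfun_apply (F h) v\<bar> \<le> B * norm v" .
qed

lemma mnE_cong: "(\<forall>h\<in>H. F h = F' h) \<Longrightarrow> mnE F = mnE F'"
  unfolding mnE_def by (metis (mono_tags, lifting) mc)

lemma mnE_const: "mnE (\<lambda>_. c) = c"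
  by (rule blinfun_eqI) (simp add: mnE_apply[where B="norm c"] m_const)

lemma mnE_add:
  fixes F F' :: "'g \<Rightarrow> ('f::real_normed_vector \<Rightarrow>\<^sub>L real)"
  assumes B: "\<forall>h\<in>H. norm (F h) \<le> B" and B': "\<forall>h\<in>H. norm (F' h) \<le> B'"
  shows "mnE (\<lambda>h. F h + F' h) = mnE F + mnE F'"
proof (rule blinfun_eqI)
  fix v
  have B2: "\<forall>h\<in>H. norm (F h + F' h) \<le> B + B'" using B B' by (meson add_mono norm_triangle_le)
  show "blinfun_apply (mnE (\<lambda>h. F h + F' h)) v = blinfun_apply (mnE F + mnE F') v"
    by (simp add: mnE_apply[OF B2] mnE_apply[OF B] mnE_apply[OF B'] blinfun.add_left
        m_add[OF bdd_ev[OF B] bdd_ev[OF B']])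
qed

lemma mnE_scale:
  fixes F :: "'g \<Rightarrow> ('f::real_normed_vector \<Rightarrow>\<^sub>L real)"
  assumes B: "\<forall>h\<in>H. norm (F h) \<le> B"
  shows "mnE (\<lambda>h. c *\<^sub>R F h) = c *\<^sub>R mnE F"
proof (rule blinfun_eqI)
  fix v
  have B2: "\<forall>h\<in>H. norm (c *\<^sub>R F h) \<le> \<bar>c\<bar> * B" using B by (simp add: mult_left_mono)
  show "blinfun_apply (mnE (\<lambda>h. c *\<^sub>R F h)) v = blinfun_apply (c *\<^sub>R mnE F) v"
    by (simp add: mnE_apply[OF B2] mnE_apply[OF B] blinfun.scaleR_left m_scale[OF bdd_ev[OF B]])
qed

lemma mnE_transl:
  fixes F :: "'g \<Rightarrow> ('f::real_normed_vector \<Rightarrow>\<^sub>L real)"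
  assumes B: "\<forall>h\<in>H. norm (F h) \<le> B" and a: "a \<in> H"
  shows "mnE (\<lambda>h. F (a \<otimes>\<^bsub>G\<^esub> h)) = mnE F"
proof (rule blinfun_eqI)
  fix v
  have B2: "\<forall>h\<in>H. norm (F (a \<otimes>\<^bsub>G\<^esub> h)) \<le> B" using B a sub by (simp add: subgroup.m_closed)
  show "blinfun_apply (mnE (\<lambda>h. F (a \<otimes>\<^bsub>G\<^esub> h))) v = blinfun_apply (mnE F) v"
    using mi[OF bdd_ev[OF B, of v] a] by (simp add: mnE_apply[OF B2] mnE_apply[OF B])
qed

lemma mnE_pi:
  fixes F :: "'g \<Rightarrow> ('f::real_normed_vector \<Rightarrow>\<^sub>L real)"
  assumes B: "\<forall>h\<in>H. norm (F h) \<le> B"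
    and Tn: "\<And>y. norm (T y) = norm y"
    and Tp: "\<And>v. \<exists>u. \<forall>y. blinfun_apply (T y) v = blinfun_apply y u"
  shows "T (mnE F) = mnE (\<lambda>h. T (F h))"
proof (rule blinfun_eqI)
  fix v
  obtain u where u: "\<forall>y. blinfun_apply (T y) v = blinfun_apply y u" using Tp by blast
  have B2: "\<forall>h\<in>H. norm (T (F h)) \<le> B" using B Tn by simp
  show "blinfun_apply (T (mnE F)) v = blinfun_apply (mnE (\<lambda>h. T (F h))) v"
    by (simp add: u mnE_apply[OF B2] mnE_apply[OF B])
qed


fun Mn :: "nat \<Rightarrow> ('g list \<Rightarrow> ('f::real_normed_vector \<Rightarrow>\<^sub>L real)) \<Rightarrow> ('f \<Rightarrow>\<^sub>L real)" where
  "Mn 0 F = F []"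
| "Mn (Suc k) F = mnE (\<lambda>h. Mn k (\<lambda>hs. F (h # hs)))"

definition bdL :: "nat \<Rightarrow> ('g list \<Rightarrow> ('f::real_normed_vector \<Rightarrow>\<^sub>L real)) \<Rightarrow> real \<Rightarrow> bool" where
  "bdL k F B \<longleftrightarrow> (\<forall>hs. length hs = k \<and> set hs \<subseteq> H \<longrightarrow> norm (F hs) \<le> B)"

lemma bdL_Cons: "bdL (Suc k) F B \<Longrightarrow> h \<in> H \<Longrightarrow> bdL k (\<lambda>hs. F (h # hs)) B"
  unfolding bdL_def by auto

lemma Mn_norm: "bdL k F B \<Longrightarrow> norm (Mn k F) \<le> B"
proof (induction k arbitrary: F)
  case 0 then show ?case by (simp add: bdL_def)
next
  case (Suc k)
  then show ?case by (auto intro!: mnE_norm dest: bdL_Cons)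
qed

lemma Mn_bd: "bdL (Suc k) F B \<Longrightarrow> \<forall>h\<in>H. norm (Mn k (\<lambda>hs. F (h # hs))) \<le> B"
  by (auto intro!: Mn_norm dest: bdL_Cons)

lemma Mn_cong: "(\<forall>hs. length hs = k \<and> set hs \<subseteq> H \<longrightarrow> F hs = F' hs) \<Longrightarrow> Mn k F = Mn k F'"
proof (induction k arbitrary: F F')
  case 0 then show ?case by simp
next
  case (Suc k)
  show ?case unfolding Mn.simps
    by (rule mnE_cong) (use Suc in \<open>auto intro!: Suc.IH\<close>)
qed

lemma Mn_const: "Mn k (\<lambda>_. c) = c"
  by (induction k) (simp_all add: mnE_const)

lemma Mn_add: "bdL k F B \<Longrightarrow> bdL k F' B' \<Longrightarrow> Mn k (\<lambda>hs. F hs + F' hs) = Mn k F + Mn k F'"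
proof (induction k arbitrary: F F')
  case 0 then show ?case by simp
next
  case (Suc k)
  have "Mn (Suc k) (\<lambda>hs. F hs + F' hs) = mnE (\<lambda>h. Mn k (\<lambda>hs. F (h # hs)) + Mn k (\<lambda>hs. F' (h # hs)))"
    unfolding Mn.simps
    by (rule mnE_cong) (use Suc in \<open>auto intro!: Suc.IH dest: bdL_Cons\<close>)
  also have "\<dots> = Mn (Suc k) F + Mn (Suc k) F'"
    unfolding Mn.simps by (rule mnE_add[OF Mn_bd[OF Suc.prems(1)] Mn_bd[OF Suc.prems(2)]])
  finally show ?case .
qed

lemma bdL_scale: "bdL k F B \<Longrightarrow> bdL k (\<lambda>hs. c *\<^sub>R F hs) (\<bar>c\<bar> * B)"
  unfolding bdL_def by (simp add: mult_left_mono)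

lemma Mn_scale: "bdL k F B \<Longrightarrow> Mn k (\<lambda>hs. c *\<^sub>R F hs) = c *\<^sub>R Mn k F"
proof (induction k arbitrary: F)
  case 0 then show ?case by simp
next
  case (Suc k)
  have "Mn (Suc k) (\<lambda>hs. c *\<^sub>R F hs) = mnE (\<lambda>h. c *\<^sub>R Mn k (\<lambda>hs. F (h # hs)))"
    unfolding Mn.simps
    by (rule mnE_cong) (use Suc in \<open>auto intro!: Suc.IH dest: bdL_Cons\<close>)
  also have "\<dots> = c *\<^sub>R Mn (Suc k) F"
    unfolding Mn.simps by (rule mnE_scale[OF Mn_bd[OF Suc.prems(1)]])
  finally show ?case .
qed

lemma Mn_sum:
  assumes "finite I" "\<forall>i\<in>I. bdL k (F i) B"
  shows "Mn k (\<lambda>hs. \<Sum>i\<in>I. F i hs) = (\<Sum>i\<in>I. Mn k (F i))"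
  using assms
proof (induction I rule: finite_induct)
  case empty then show ?case by (simp add: Mn_const)
next
  case (insert a I)
  have bs: "bdL k (\<lambda>hs. \<Sum>i\<in>I. F i hs) (real (card I) * B)"
    using insert.prems insert.hyps(1) unfolding bdL_def
  proof (intro allI impI)
    fix hs assume "\<forall>i\<in>insert a I. \<forall>hs. length hs = k \<and> set hs \<subseteq> H \<longrightarrow> norm (F i hs) \<le> B"
      "length hs = k \<and> set hs \<subseteq> H"
    then have "\<forall>i\<in>I. norm (F i hs) \<le> B" by auto
    then have "norm (\<Sum>i\<in>I. F i hs) \<le> (\<Sum>i\<in>I. B)" by (intro sum_norm_le) auto
    then show "norm (\<Sum>i\<in>I. F i hs) \<le> real (card I) * B" by simp
  qed
  have "Mn k (\<lambda>hs. \<Sum>i\<in>insert a I. F i hs) = Mn k (\<lambda>hs. F a hs + (\<Sum>i\<in>I. F i hs))"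
    using insert.hyps by simp
  also have "\<dots> = Mn k (F a) + Mn k (\<lambda>hs. \<Sum>i\<in>I. F i hs)"
    using insert.prems bs by (intro Mn_add) auto
  finally show ?case using insert by simp
qed


lemma Mn_del: "i \<le> k \<Longrightarrow> bdL k F B \<Longrightarrow> Mn (Suc k) (\<lambda>hs. F (del i hs)) = Mn k F"
proof (induction k arbitrary: i F)
  case 0
  then have "i = 0" by simp
  then show ?case by (simp add: del_Cons0 mnE_const)
next
  case (Suc k)
  show ?case
  proof (cases i)
    case 0
    have "Mn (Suc (Suc k)) (\<lambda>hs. F (del i hs)) = mnE (\<lambda>h. Mn (Suc k) (\<lambda>hs. F hs))"
      by (subst Mn.simps(2), simp only: 0 del_Cons0)
    then show ?thesis by (simp only: mnE_const)
  next
    case (Suc i')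
    have "Mn (Suc (Suc k)) (\<lambda>hs. F (del i hs)) = mnE (\<lambda>h. Mn (Suc k) (\<lambda>hs. F (h # del i' hs)))"
      by (subst Mn.simps(2), simp only: Suc del_ConsS)
    also have "\<dots> = mnE (\<lambda>h. Mn k (\<lambda>hs. F (h # hs)))"
    proof (rule mnE_cong, intro ballI)
      fix h assume "h \<in> H"
      hence "bdL k (\<lambda>hs. F (h # hs)) B" using bdL_Cons Suc.prems(2) by blast
      moreover have "i' \<le> k" using Suc.prems(1) \<open>i = Suc i'\<close> by simp
      ultimately show "Mn (Suc k) (\<lambda>hs. F (h # del i' hs)) = Mn k (\<lambda>hs. F (h # hs))"
        using Suc.IH by blast
    qed
    also have "\<dots> = Mn (Suc k) F" by simp
    finally show ?thesis .
  qed
qed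

fun mulL :: "'g list \<Rightarrow> 'g list \<Rightarrow> 'g list" where
  "mulL (a # as) (b # bs) = (a \<otimes>\<^bsub>G\<^esub> b) # mulL as bs"
| "mulL _ _ = []"

lemma Mn_transl:
  "length hs' = k \<Longrightarrow> set hs' \<subseteq> H \<Longrightarrow> bdL k F B \<Longrightarrow> Mn k (\<lambda>hs. F (mulL hs' hs)) = Mn k F"
proof (induction k arbitrary: hs' F)
  case 0 then show ?case by simp
next
  case (Suc k)
  then obtain a hs'' where a: "hs' = a # hs''" by (cases hs') auto
  have aH: "a \<in> H" "set hs'' \<subseteq> H" "length hs'' = k" using Suc.prems a by auto
  have "Mn (Suc k) (\<lambda>hs. F (mulL hs' hs)) = mnE (\<lambda>h. Mn k (\<lambda>hs. F ((a \<otimes>\<^bsub>G\<^esub> h) # mulL hs'' hs)))"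
    by (simp add: a)
  also have "\<dots> = mnE (\<lambda>h. Mn k (\<lambda>hs. F ((a \<otimes>\<^bsub>G\<^esub> h) # hs)))"
  proof (rule mnE_cong, intro ballI)
    fix h assume "h \<in> H"
    hence "a \<otimes>\<^bsub>G\<^esub> h \<in> H" using aH sub by (simp add: subgroup.m_closed)
    hence "bdL k (\<lambda>hs. F ((a \<otimes>\<^bsub>G\<^esub> h) # hs)) B" using bdL_Cons Suc.prems(3) by blast
    from Suc.IH[OF aH(3) aH(2) this]
    show "Mn k (\<lambda>hs. F ((a \<otimes>\<^bsub>G\<^esub> h) # mulL hs'' hs)) = Mn k (\<lambda>hs. F ((a \<otimes>\<^bsub>G\<^esub> h) # hs))" .
  qed
  also have "\<dots> = mnE (\<lambda>h. Mn k (\<lambda>hs. F (h # hs)))"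
    using mnE_transl[OF Mn_bd[OF Suc.prems(3)] aH(1)] .
  also have "\<dots> = Mn (Suc k) F" by simp
  finally show ?case .
qed

lemma Mn_pi:
  assumes "bdL k F B"
    and Tn: "\<And>y. norm (T y) = norm y"
    and Tp: "\<And>v. \<exists>u. \<forall>y. blinfun_apply (T y) v = blinfun_apply y u"
  shows "T (Mn k F) = Mn k (\<lambda>hs. T (F hs))"
  using assms(1)
proof (induction k arbitrary: F)
  case 0 then show ?case by simp
next
  case (Suc k)
  have "T (Mn (Suc k) F) = mnE (\<lambda>h. T (Mn k (\<lambda>hs. F (h # hs))))"
    by (simp add: mnE_pi[OF Mn_bd[OF Suc.prems] Tn Tp])
  also have "\<dots> = Mn (Suc k) (\<lambda>hs. T (F hs))"
    by (simp, rule mnE_cong) (use Suc in \<open>auto dest: bdL_Cons\<close>)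
  finally show ?case .
qed

end



lemma del_append1: "i < length A \<Longrightarrow> del i (A @ B) = del i A @ B"
  by (simp add: del_def)
lemma del_append2: "length A \<le> i \<Longrightarrow> del i (A @ B) = A @ del (i - length A) B"
  by (simp add: del_def Suc_diff_le)
lemma take_del: "k \<le> i \<Longrightarrow> take k (del i xs) = take k xs"
  by (simp add: del_def) linarith
lemma drop_del: "j \<le> i \<Longrightarrow> drop j (del i xs) = del (i - j) (drop j xs)"
  by (cases "length xs \<le> i") (auto simp: del_def drop_take Suc_diff_le min_def)
lemma drop_del2: "i \<le> j \<Longrightarrow> i < length xs \<Longrightarrow> drop j (del i xs) = drop (Suc j) xs"
  by (simp add: del_def)
lemma del_take: "i < k \<Longrightarrow> del i (take k xs) = take (k - 1) (del i xs)"
proof -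
  assume "i < k"
  then obtain k' where k: "k = Suc k'" "i \<le> k'" by (cases k) auto
  show ?thesis using k by (cases "length xs \<le> i") (auto simp: del_def take_drop min_def)
qed
lemma length_del: "i < length xs \<Longrightarrow> length (del i xs) = length xs - 1"
  by (simp add: del_def)
lemma set_del: "set (del i xs) \<subseteq> set xs"
  by (auto simp: del_def dest: in_set_takeD in_set_dropD)

context amen begin

lemma length_mulL[simp]: "length (mulL xs ys) = min (length xs) (length ys)"
  by (induction xs ys rule: mulL.induct) auto

lemma del_mulL: "length xs = length ys \<Longrightarrow> del i (mulL xs ys) = mulL (del i xs) (del i ys)"
proof (induction xs ys arbitrary: i rule: mulL.induct)
  case (1 a as b bs)
  then show ?case by (cases i) (simp_all add: del_Cons0 del_ConsS)
qed (auto simp: del_def)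


definition P :: "'g list \<Rightarrow> nat \<Rightarrow> 'g list \<Rightarrow> 'g list" where
  "P x j hs = mulL (take (Suc j) x) hs @ drop j x"
definition Q :: "'g list \<Rightarrow> nat \<Rightarrow> 'g list \<Rightarrow> 'g list" where
  "Q x k hs = mulL (take k x) hs @ drop k x"

lemma P_a: "j < i \<Longrightarrow> i < length x \<Longrightarrow> length hs = Suc j \<Longrightarrow> P (del i x) j hs = del (Suc i) (P x j hs)"
  unfolding P_def
  by (subst del_append2) (simp_all add: take_del drop_del)

lemma P_b: "i \<le> j \<Longrightarrow> Suc j < length x \<Longrightarrow> length hs = Suc (Suc j) \<Longrightarrow>
    del i (P x (Suc j) hs) = P (del i x) j (del i hs)"
  unfolding P_def
  by (subst del_append1) (simp_all add: del_mulL del_take drop_del2)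

lemma P_c: "j < length x \<Longrightarrow> length hs = Suc j \<Longrightarrow> del j (P x j hs) = Q x j (del j hs)"
  unfolding P_def Q_def
  by (subst del_append1) (simp_all add: del_mulL del_take take_del)

lemma P_d: "j < length x \<Longrightarrow> length hs = Suc j \<Longrightarrow> del (Suc j) (P x j hs) = Q x (Suc j) hs"
  unfolding P_def Q_def
  by (subst del_append2) (simp_all add: del_def)

lemma H_carr: "H \<subseteq> carrier G" using sub by (rule subgroup.subset)

lemma set_mulL: "set xs \<subseteq> carrier G \<Longrightarrow> set ys \<subseteq> H \<Longrightarrow> set (mulL xs ys) \<subseteq> carrier G"
proof (induction xs ys rule: mulL.induct)
  case (1 a as b bs)
  then show ?case using H_carr grp by (auto intro: group.subgroup_self monoid.m_closed group.is_monoid)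
qed auto

lemma length_P: "j < length x \<Longrightarrow> length hs = Suc j \<Longrightarrow> length (P x j hs) = Suc (length x)"
  by (simp add: P_def)
lemma set_P: "set x \<subseteq> carrier G \<Longrightarrow> set hs \<subseteq> H \<Longrightarrow> set (P x j hs) \<subseteq> carrier G"
  unfolding P_def using set_mulL[of "take (Suc j) x" hs] by (auto dest: in_set_takeD in_set_dropD)
lemma length_Q: "k \<le> length x \<Longrightarrow> length hs = k \<Longrightarrow> length (Q x k hs) = length x"
  by (simp add: Q_def)
lemma set_Q: "set x \<subseteq> carrier G \<Longrightarrow> set hs \<subseteq> H \<Longrightarrow> set (Q x k hs) \<subseteq> carrier G"
  unfolding Q_def using set_mulL[of "take k x" hs] by (auto dest: in_set_takeD in_set_dropD)

end



context amen begin

definition sop :: "('g list \<Rightarrow> ('f::real_normed_vector \<Rightarrow>\<^sub>L real)) \<Rightarrow> 'g list \<Rightarrow> ('f \<Rightarrow>\<^sub>L real)" where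
  "sop f x = (\<Sum>j<length x. ((-1::real) ^ j) *\<^sub>R Mn (Suc j) (\<lambda>hs. f (P x j hs)))"

definition Aop :: "('g list \<Rightarrow> ('f::real_normed_vector \<Rightarrow>\<^sub>L real)) \<Rightarrow> 'g list \<Rightarrow> ('f \<Rightarrow>\<^sub>L real)" where
  "Aop f x = Mn (length x) (\<lambda>hs. f (mulL x hs))"

lemma cob_del: "coboundary f xs = (\<Sum>i<length xs. ((-1::real) ^ i) *\<^sub>R f (del i xs))"
  by (simp add: coboundary_def del_def)

lemma prism:
  fixes f :: "'g list \<Rightarrow> ('f::real_normed_vector \<Rightarrow>\<^sub>L real)"
  assumes x: "length x = Suc n" "set x \<subseteq> carrier G"
    and fB: "\<forall>xs. length xs = Suc n \<and> set xs \<subseteq> carrier G \<longrightarrow> norm (f xs) \<le> B"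
  shows "coboundary (sop f) x = f x - Aop f x - sop (coboundary f) x"
proof -
  define a where "a j i = ((-1::real) ^ (i + j)) *\<^sub>R Mn (Suc j) (\<lambda>hs. f (del i (P x j hs)))" for j i
  define c where "c k = Mn k (\<lambda>hs. f (Q x k hs))" for k
  define L where "L j = (\<Sum>i<j. a j i)" for j
  define R where "R j = (\<Sum>i\<in>{Suc (Suc j)..<Suc (Suc n)}. a j i)" for j
  have bdP: "bdL (Suc j) (\<lambda>hs. f (del i (P x j hs))) B" if "j < Suc n" "i < Suc (Suc n)" for i j
    unfolding bdL_def
  proof (intro allI impI)
    fix hs :: "'g list" assume hs: "length hs = Suc j \<and> set hs \<subseteq> H"
    have "length (P x j hs) = Suc (Suc n)" using that hs x length_P[of j x hs] by simp
    then have l: "length (del i (P x j hs)) = Suc n" using that length_del[of i "P x j hs"] by simp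
    have "set (del i (P x j hs)) \<subseteq> set (P x j hs)" by (rule set_del)
    also have "\<dots> \<subseteq> carrier G" using set_P[OF x(2)] hs by simp
    finally show "norm (f (del i (P x j hs))) \<le> B" using fB l by blast
  qed
  have s1: "sop (coboundary f) x = (\<Sum>j<Suc n. \<Sum>i<Suc (Suc n). a j i)"
    unfolding sop_def x(1)
  proof (rule sum.cong[OF refl])
    fix j assume j: "j \<in> {..<Suc n}"
    have "Mn (Suc j) (\<lambda>hs. coboundary f (P x j hs))
        = Mn (Suc j) (\<lambda>hs. \<Sum>i<Suc (Suc n). ((-1::real) ^ i) *\<^sub>R f (del i (P x j hs)))"
    proof (rule Mn_cong, intro allI impI)
      fix hs :: "'g list" assume "length hs = Suc j \<and> set hs \<subseteq> H"
      then have "length (P x j hs) = Suc (Suc n)" using j x by (simp add: length_P)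
      then show "coboundary f (P x j hs) = (\<Sum>i<Suc (Suc n). ((-1::real) ^ i) *\<^sub>R f (del i (P x j hs)))"
        by (simp only: cob_del)
    qed
    also have "\<dots> = (\<Sum>i<Suc (Suc n). Mn (Suc j) (\<lambda>hs. ((-1::real) ^ i) *\<^sub>R f (del i (P x j hs))))"
    proof (rule Mn_sum[where B=B], simp, intro ballI)
      fix i assume "i \<in> {..<Suc (Suc n)}"
      then have "bdL (Suc j) (\<lambda>hs. f (del i (P x j hs))) B" using bdP j by simp
      then show "bdL (Suc j) (\<lambda>hs. ((-1::real) ^ i) *\<^sub>R f (del i (P x j hs))) B"
        by (simp add: bdL_def)
    qed
    also have "\<dots> = (\<Sum>i<Suc (Suc n). ((-1::real) ^ i) *\<^sub>R Mn (Suc j) (\<lambda>hs. f (del i (P x j hs))))"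
    proof (rule sum.cong[OF refl])
      fix i assume "i \<in> {..<Suc (Suc n)}"
      then have "bdL (Suc j) (\<lambda>hs. f (del i (P x j hs))) B" using bdP j by simp
      then show "Mn (Suc j) (\<lambda>hs. ((-1::real) ^ i) *\<^sub>R f (del i (P x j hs))) = ((-1::real) ^ i) *\<^sub>R Mn (Suc j) (\<lambda>hs. f (del i (P x j hs)))"
        by (rule Mn_scale)
    qed
    finally show "((-1::real) ^ j) *\<^sub>R Mn (Suc j) (\<lambda>hs. coboundary f (P x j hs)) = (\<Sum>i<Suc (Suc n). a j i)"
      unfolding a_def by (simp only: scaleR_sum_right scaleR_scaleR power_add mult.commute)
  qed
  define b where "b i j = ((-1::real) ^ (i + j)) *\<^sub>R Mn (Suc j) (\<lambda>hs. f (P (del i x) j hs))" for i j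
  have s2: "coboundary (sop f) x = (\<Sum>i<Suc n. \<Sum>j<n. b i j)"
    unfolding cob_del x(1)
  proof (rule sum.cong[OF refl])
    fix i assume i: "i \<in> {..<Suc n}"
    have "length (del i x) = n" using i x length_del[of i x] by simp
    then show "((-1::real) ^ i) *\<^sub>R sop f (del i x) = (\<Sum>j<n. b i j)"
      by (simp add: sop_def b_def scaleR_sum_right power_add)
  qed
  have s3a: "b i j = - a j (Suc i)" if "j < i" "i < Suc n" for i j
  proof -
    have "Mn (Suc j) (\<lambda>hs. f (del (Suc i) (P x j hs))) = Mn (Suc j) (\<lambda>hs. f (P (del i x) j hs))"
    proof (rule Mn_cong, intro allI impI)
      fix hs :: "'g list" assume "length hs = Suc j \<and> set hs \<subseteq> H"
      then show "f (del (Suc i) (P x j hs)) = f (P (del i x) j hs)"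
        using P_a[of j i x hs] that x by simp
    qed
    then show ?thesis by (simp add: a_def b_def)
  qed
  have s3b: "b i j = - a (Suc j) i" if "i \<le> j" "j < n" for i j
  proof -
    define g where "g hs = f (P (del i x) j hs)" for hs
    have "Mn (Suc (Suc j)) (\<lambda>hs. f (del i (P x (Suc j) hs))) = Mn (Suc (Suc j)) (\<lambda>hs. g (del i hs))"
    proof (rule Mn_cong, intro allI impI)
      fix hs :: "'g list" assume "length hs = Suc (Suc j) \<and> set hs \<subseteq> H"
      then show "f (del i (P x (Suc j) hs)) = g (del i hs)"
        using P_b[of i j x hs] that x by (simp add: g_def)
    qed
    also have "\<dots> = Mn (Suc j) g"
    proof (rule Mn_del)
      show "i \<le> Suc j" using that by simp
      show "bdL (Suc j) g B" unfolding bdL_def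
      proof (intro allI impI)
        fix hs :: "'g list" assume hs: "length hs = Suc j \<and> set hs \<subseteq> H"
        have ld: "length (del i x) = n" using that x length_del[of i x] by simp
        have "length (P (del i x) j hs) = Suc n" using that hs ld length_P[of j "del i x" hs] by simp
        moreover have "set (del i x) \<subseteq> carrier G" using set_del[of i x] x by blast
        then have "set (P (del i x) j hs) \<subseteq> carrier G" using set_P hs by blast
        ultimately show "norm (g hs) \<le> B" using fB by (simp add: g_def)
      qed
    qed
    finally show ?thesis by (simp add: a_def b_def g_def)
  qed
  have bdQ: "bdL k (\<lambda>hs. f (Q x k hs)) B" if "k \<le> Suc n" for k
    unfolding bdL_def
  proof (intro allI impI)
    fix hs :: "'g list" assume hs: "length hs = k \<and> set hs \<subseteq> H"
    have "length (Q x k hs) = Suc n" using that hs x length_Q[of k x hs] by simp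
    moreover have "set (Q x k hs) \<subseteq> carrier G" using set_Q[OF x(2)] hs by blast
    ultimately show "norm (f (Q x k hs)) \<le> B" using fB by blast
  qed
  have s4a: "a j j = c j" if "j < Suc n" for j
  proof -
    have "Mn (Suc j) (\<lambda>hs. f (del j (P x j hs))) = Mn (Suc j) (\<lambda>hs. f (Q x j (del j hs)))"
    proof (rule Mn_cong, intro allI impI)
      fix hs :: "'g list" assume "length hs = Suc j \<and> set hs \<subseteq> H"
      then show "f (del j (P x j hs)) = f (Q x j (del j hs))"
        using P_c[of j x hs] that x by simp
    qed
    also have "\<dots> = c j" unfolding c_def
      by (rule Mn_del[of j j _ B]) (use bdQ[of j] that in auto)
    finally show ?thesis by (simp add: a_def)
  qed
  have s4b: "a j (Suc j) = - c (Suc j)" if "j < Suc n" for j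
  proof -
    have "Mn (Suc j) (\<lambda>hs. f (del (Suc j) (P x j hs))) = c (Suc j)"
      unfolding c_def
    proof (rule Mn_cong, intro allI impI)
      fix hs :: "'g list" assume "length hs = Suc j \<and> set hs \<subseteq> H"
      then show "f (del (Suc j) (P x j hs)) = f (Q x (Suc j) hs)"
        using P_d[of j x hs] that x by simp
    qed
    then show ?thesis by (simp add: a_def)
  qed
  have s5: "(\<Sum>i<Suc (Suc n). a j i) = L j + c j - c (Suc j) + R j" if "j < Suc n" for j
  proof -
    have "(\<Sum>i<Suc (Suc n). a j i) = (\<Sum>i\<in>{0..<j}. a j i) + (\<Sum>i\<in>{j..<Suc (Suc n)}. a j i)"
      using that by (simp add: atLeast0LessThan[symmetric] sum.atLeastLessThan_concat)
    also have "(\<Sum>i\<in>{j..<Suc (Suc n)}. a j i) = a j j + (a j (Suc j) + R j)"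
    proof -
      have "(\<Sum>i\<in>{j..<Suc (Suc n)}. a j i) = a j j + (\<Sum>i\<in>{Suc j..<Suc (Suc n)}. a j i)"
        by (rule sum.atLeast_Suc_lessThan) (use that in simp)
      also have "(\<Sum>i\<in>{Suc j..<Suc (Suc n)}. a j i) = a j (Suc j) + (\<Sum>i\<in>{Suc (Suc j)..<Suc (Suc n)}. a j i)"
        by (rule sum.atLeast_Suc_lessThan) (use that in simp)
      finally show ?thesis by (simp add: R_def)
    qed
    finally show ?thesis using s4a[OF that] s4b[OF that]
      by (simp add: L_def atLeast0LessThan)
  qed
  have s7: "(\<Sum>i<Suc n. \<Sum>j<n. b i j) = (\<Sum>j<n. - L (Suc j) - R j)"
  proof -
    have "(\<Sum>i<Suc n. \<Sum>j<n. b i j) = (\<Sum>j<n. \<Sum>i<Suc n. b i j)" by (rule sum.swap)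
    also have "\<dots> = (\<Sum>j<n. - L (Suc j) - R j)"
    proof (rule sum.cong[OF refl])
      fix j assume j: "j \<in> {..<n}"
      have "(\<Sum>i<Suc n. b i j) = (\<Sum>i\<in>{0..<Suc n}. b i j)" by (simp only: atLeast0LessThan)
      also have "\<dots> = (\<Sum>i\<in>{0..<Suc j}. b i j) + (\<Sum>i\<in>{Suc j..<Suc n}. b i j)"
        by (rule sum.atLeastLessThan_concat[symmetric]) (use j in simp_all)
      also have "(\<Sum>i\<in>{0..<Suc j}. b i j) = (\<Sum>i\<in>{0..<Suc j}. - a (Suc j) i)"
        by (rule sum.cong[OF refl]) (use j s3b in auto)
      also have "\<dots> = - L (Suc j)" by (simp add: L_def atLeast0LessThan sum_negf)
      also have "(\<Sum>i\<in>{Suc j..<Suc n}. b i j) = (\<Sum>i\<in>{Suc j..<Suc n}. - a j (Suc i))"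
        by (rule sum.cong[OF refl]) (use j s3a in auto)
      also have "\<dots> = - R j"
        by (simp only: R_def sum_negf sum.shift_bounds_Suc_ivl)
      finally show "(\<Sum>i<Suc n. b i j) = - L (Suc j) - R j" by simp
    qed
    finally show ?thesis .
  qed
  have sL: "(\<Sum>j<Suc n. L j) = (\<Sum>j<n. L (Suc j))"
  proof -
    have L0: "L 0 = 0" by (simp add: L_def)
    show ?thesis by (simp only: sum.lessThan_Suc_shift L0 add_0_left)
  qed
  have sR: "(\<Sum>j<Suc n. R j) = (\<Sum>j<n. R j)"
    by (simp add: R_def)
  have sc: "(\<Sum>j<Suc n. c j - c (Suc j)) = c 0 - c (Suc n)"
    by (rule sum_lessThan_telescope')
  have c0: "c 0 = f x" by (simp add: c_def Q_def)
  have cn: "c (Suc n) = Aop f x" by (simp add: c_def Q_def Aop_def x(1)[symmetric])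
  have "sop (coboundary f) x = (\<Sum>j<Suc n. L j + c j - c (Suc j) + R j)"
    using s1 s5 by simp
  also have "\<dots> = (\<Sum>j<Suc n. L j) + (\<Sum>j<Suc n. c j - c (Suc j)) + (\<Sum>j<Suc n. R j)"
  proof -
    have "(\<Sum>j<Suc n. L j + c j - c (Suc j) + R j) = (\<Sum>j<Suc n. L j + (c j - c (Suc j)) + R j)"
      by (rule sum.cong) auto
    then show ?thesis by (simp only: sum.distrib)
  qed
  finally have A: "sop (coboundary f) x = (\<Sum>j<n. L (Suc j)) + (c 0 - c (Suc n)) + (\<Sum>j<n. R j)"
    using sL sR sc by simp
  have B: "coboundary (sop f) x = - (\<Sum>j<n. L (Suc j)) - (\<Sum>j<n. R j)"
    using s2 s7 by (simp add: sum_subtractf sum_negf)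
  show ?thesis unfolding A B c0[symmetric] cn[symmetric] by (simp add: algebra_simps)
qed

end



lemma conj_id1:
  assumes "group G" "t \<in> carrier G" "h \<in> carrier G"
  shows "inv\<^bsub>G\<^esub> t \<otimes>\<^bsub>G\<^esub> (t \<otimes>\<^bsub>G\<^esub> h \<otimes>\<^bsub>G\<^esub> inv\<^bsub>G\<^esub> t) \<otimes>\<^bsub>G\<^esub> t = h"
proof -
  interpret group G by fact
  have "inv\<^bsub>G\<^esub> t \<otimes>\<^bsub>G\<^esub> (t \<otimes>\<^bsub>G\<^esub> h) = h" using assms(2,3) by (simp add: m_assoc[symmetric])
  then show ?thesis using assms(2,3) by (simp add: m_assoc)
qed

lemma conj_id2:
  assumes "group G" "t \<in> carrier G" "h \<in> carrier G" "g \<in> carrier G"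
  shows "g \<otimes>\<^bsub>G\<^esub> (t \<otimes>\<^bsub>G\<^esub> h) = t \<otimes>\<^bsub>G\<^esub> ((inv\<^bsub>G\<^esub> t \<otimes>\<^bsub>G\<^esub> g \<otimes>\<^bsub>G\<^esub> t) \<otimes>\<^bsub>G\<^esub> h)"
proof -
  interpret group G by fact
  have "t \<otimes>\<^bsub>G\<^esub> (inv\<^bsub>G\<^esub> t \<otimes>\<^bsub>G\<^esub> y) = y" if "y \<in> carrier G" for y using assms(2) that by (simp add: m_assoc[symmetric])
  then show ?thesis using assms(2-4) by (simp add: m_assoc)
qed

context amen begin

lemma map_mulL:
  assumes "g \<in> carrier G" "set xs \<subseteq> carrier G" "set hs \<subseteq> H"
  shows "map (\<lambda>y. g \<otimes>\<^bsub>G\<^esub> y) (mulL xs hs) = mulL (map (\<lambda>y. g \<otimes>\<^bsub>G\<^esub> y) xs) hs"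
  using assms(2,3)
proof (induction xs hs rule: mulL.induct)
  case (1 a as b bs)
  then show ?case using assms(1) H_carr grp by (auto simp: monoid.m_assoc group.is_monoid)
qed auto

lemma map_P:
  assumes "g \<in> carrier G" "set x \<subseteq> carrier G" "set hs \<subseteq> H"
  shows "map (\<lambda>y. g \<otimes>\<^bsub>G\<^esub> y) (P x j hs) = P (map (\<lambda>y. g \<otimes>\<^bsub>G\<^esub> y) x) j hs"
proof -
  have "set (take (Suc j) x) \<subseteq> carrier G" using assms(2) by (meson order_trans set_take_subset)
  then show ?thesis unfolding P_def using map_mulL[OF assms(1) _ assms(3)] by (simp add: take_map drop_map)
qed

lemma conj_mulL:
  assumes "g \<in> carrier G" "set x \<subseteq> carrier G" "set hs \<subseteq> H"
  shows "map (\<lambda>y. g \<otimes>\<^bsub>G\<^esub> y) (mulL x hs) = mulL x (mulL (map (\<lambda>t. inv\<^bsub>G\<^esub> t \<otimes>\<^bsub>G\<^esub> g \<otimes>\<^bsub>G\<^esub> t) x) hs)"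
  using assms(2,3)
proof (induction x hs rule: mulL.induct)
  case (1 a as b bs)
  then show ?case using assms(1) H_carr grp conj_id2[of G a b g] by auto
qed auto

end



context amen begin

lemma main_amen:
  fixes \<pi> :: "'g \<Rightarrow> ('f::real_normed_vector \<Rightarrow>\<^sub>L real) \<Rightarrow> ('f \<Rightarrow>\<^sub>L real)"
  assumes pl: "\<forall>s\<in>carrier G. linear (\<pi> s) \<and> (\<forall>y. norm (\<pi> s y) = norm y)"
    and pd: "\<forall>s\<in>carrier G. \<forall>v. \<exists>u. \<forall>y. blinfun_apply (\<pi> s y) v = blinfun_apply y u"
    and mix: "mixing G \<pi>" and nm: "normalish G H"
  shows "bounded_cohomology_trivial G \<pi> n"
  unfolding bounded_cohomology_trivial_def
proof (intro allI impI)
  fix f :: "'g list \<Rightarrow> ('f \<Rightarrow>\<^sub>L real)"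
  assume fa: "bcochain G \<pi> n f \<and> (\<forall>xs\<in>tuples G (Suc (Suc n)). coboundary f xs = 0)"
  obtain B where fB0: "\<forall>xs\<in>tuples G (Suc n). norm (f xs) \<le> B"
    using fa unfolding bcochain_def by blast
  have fB: "\<forall>xs. length xs = Suc n \<and> set xs \<subseteq> carrier G \<longrightarrow> norm (f xs) \<le> B"
    using fB0 by (simp add: tuples_def)
  have feq: "\<And>g xs. g \<in> carrier G \<Longrightarrow> length xs = Suc n \<Longrightarrow> set xs \<subseteq> carrier G \<Longrightarrow>
      f (map (\<lambda>x. g \<otimes>\<^bsub>G\<^esub> x) xs) = \<pi> g (f xs)"
    using fa unfolding bcochain_def tuples_def by blast
  have fcoc: "\<And>xs. length xs = Suc (Suc n) \<Longrightarrow> set xs \<subseteq> carrier G \<Longrightarrow> coboundary f xs = 0"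
    using fa unfolding tuples_def by blast
  have bdfx: "bdL (Suc n) (\<lambda>hs. f (mulL x hs)) B" if x: "length x = Suc n" "set x \<subseteq> carrier G" for x
    unfolding bdL_def using fB set_mulL[OF x(2)] x(1) by auto
  have A0: "Aop f x = 0" if x: "length x = Suc n" "set x \<subseteq> carrier G" for x
  proof (rule ccontr)
    assume nz: "Aop f x \<noteq> 0"
    define K where "K = (\<Inter>t\<in>set x. (\<lambda>h. t \<otimes>\<^bsub>G\<^esub> h \<otimes>\<^bsub>G\<^esub> inv\<^bsub>G\<^esub> t) ` H)"
    have ne: "set x \<noteq> {}" using x(1) by auto
    have infK: "infinite K" using nm ne x(2) unfolding normalish_def K_def by blast
    have "K \<subseteq> {s \<in> carrier G. \<pi> s (Aop f x) = Aop f x}"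
    proof
      fix g assume gK: "g \<in> K"
      obtain t0 where t0: "t0 \<in> set x" using ne by (metis all_not_in_conv)
      then obtain h0 where "h0 \<in> H" "g = t0 \<otimes>\<^bsub>G\<^esub> h0 \<otimes>\<^bsub>G\<^esub> inv\<^bsub>G\<^esub> t0" using gK unfolding K_def by blast
      then have gG: "g \<in> carrier G" using t0 x(2) H_carr grp
        by (auto intro!: monoid.m_closed group.is_monoid group.inv_closed)
      define hs' where "hs' = map (\<lambda>t. inv\<^bsub>G\<^esub> t \<otimes>\<^bsub>G\<^esub> g \<otimes>\<^bsub>G\<^esub> t) x"
      have hs'H: "set hs' \<subseteq> H"
      proof
        fix z assume "z \<in> set hs'"
        then obtain t where t: "t \<in> set x" "z = inv\<^bsub>G\<^esub> t \<otimes>\<^bsub>G\<^esub> g \<otimes>\<^bsub>G\<^esub> t" unfolding hs'_def by auto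
        then obtain h where h: "h \<in> H" "g = t \<otimes>\<^bsub>G\<^esub> h \<otimes>\<^bsub>G\<^esub> inv\<^bsub>G\<^esub> t" using gK unfolding K_def by blast
        have "z = h" using t h conj_id1[OF grp, of t h] x(2) H_carr by auto
        then show "z \<in> H" using h by simp
      qed
      have lhs': "length hs' = Suc n" using x(1) by (simp add: hs'_def)
      have pg: "linear (\<pi> g)" "\<And>y. norm (\<pi> g y) = norm y" using pl gG by auto
      have pdg: "\<And>v. \<exists>u. \<forall>y. blinfun_apply (\<pi> g y) v = blinfun_apply y u" using pd gG by auto
      have "\<pi> g (Aop f x) = Mn (Suc n) (\<lambda>hs. \<pi> g (f (mulL x hs)))"
        unfolding Aop_def x(1) by (rule Mn_pi[OF bdfx[OF x] pg(2) pdg])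
      also have "\<dots> = Mn (Suc n) (\<lambda>hs. f (mulL x (mulL hs' hs)))"
      proof (rule Mn_cong, intro allI impI)
        fix hs :: "'g list" assume hs: "length hs = Suc n \<and> set hs \<subseteq> H"
        have "\<pi> g (f (mulL x hs)) = f (map (\<lambda>y. g \<otimes>\<^bsub>G\<^esub> y) (mulL x hs))"
          using feq[OF gG, of "mulL x hs"] hs x set_mulL[OF x(2)] by simp
        also have "\<dots> = f (mulL x (mulL hs' hs))"
          unfolding hs'_def using conj_mulL[OF gG x(2)] hs by simp
        finally show "\<pi> g (f (mulL x hs)) = f (mulL x (mulL hs' hs))" .
      qed
      also have "\<dots> = Mn (Suc n) (\<lambda>hs. f (mulL x hs))"
        using Mn_transl[OF lhs' hs'H bdfx[OF x]] .
      finally show "g \<in> {s \<in> carrier G. \<pi> s (Aop f x) = Aop f x}"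
        using gG by (simp add: Aop_def x(1))
    qed
    moreover have "finite {s \<in> carrier G. \<pi> s (Aop f x) = Aop f x}"
      using mix nz unfolding mixing_def by blast
    ultimately show False using infK finite_subset by blast
  qed
  have S0: "sop (coboundary f) x = 0" if x: "length x = Suc n" "set x \<subseteq> carrier G" for x
    unfolding sop_def
  proof (rule sum.neutral, intro ballI)
    fix j assume j: "j \<in> {..<length x}"
    have "Mn (Suc j) (\<lambda>hs. coboundary f (P x j hs)) = Mn (Suc j) (\<lambda>_. 0)"
    proof (rule Mn_cong, intro allI impI)
      fix hs :: "'g list" assume hs: "length hs = Suc j \<and> set hs \<subseteq> H"
      show "coboundary f (P x j hs) = 0"
        by (rule fcoc) (use hs j x length_P[of j x hs] set_P[OF x(2)] in auto)
    qed
    then show "((-1::real) ^ j) *\<^sub>R Mn (Suc j) (\<lambda>hs. coboundary f (P x j hs)) = 0"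
      by (simp add: Mn_const)
  qed
  have key: "coboundary (sop f) x = f x" if x: "length x = Suc n" "set x \<subseteq> carrier G" for x
    using prism[OF x fB] A0[OF x] S0[OF x] by simp
  show "if n = 0 then \<forall>xs\<in>tuples G 1. f xs = 0
        else \<exists>h. bcochain G \<pi> (n - 1) h \<and> (\<forall>xs\<in>tuples G (Suc n). f xs = coboundary h xs)"
  proof (cases n)
    case 0
    show ?thesis
    proof (simp add: 0, intro ballI)
      fix xs assume xs: "xs \<in> tuples G (Suc 0)"
      then have "f xs = coboundary (sop f) xs" using key 0 by (simp add: tuples_def)
      also have "\<dots> = 0" using xs by (auto simp: tuples_def cob_del sop_def del_def length_Suc_conv)
      finally show "f xs = 0" .
    qed
  next
    case (Suc n')
    have bd: "\<exists>C. \<forall>xs\<in>tuples G (Suc n'). norm (sop f xs) \<le> C"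
    proof (intro exI ballI)
      fix xs assume xs: "xs \<in> tuples G (Suc n')"
      have "norm (sop f xs) \<le> (\<Sum>j<length xs. norm (((-1::real) ^ j) *\<^sub>R Mn (Suc j) (\<lambda>hs. f (P xs j hs))))"
        unfolding sop_def by (rule norm_sum)
      also have "\<dots> \<le> (\<Sum>j<length xs. B)"
      proof (rule sum_mono)
        fix j assume j: "j \<in> {..<length xs}"
        have "bdL (Suc j) (\<lambda>hs. f (P xs j hs)) B"
          unfolding bdL_def
        proof (intro allI impI)
          fix hs :: "'g list" assume hs: "length hs = Suc j \<and> set hs \<subseteq> H"
          show "norm (f (P xs j hs)) \<le> B"
            using fB hs j xs length_P[of j xs hs] set_P[of xs hs j] Suc by (auto simp: tuples_def)
        qed
        from Mn_norm[OF this] show "norm (((-1::real) ^ j) *\<^sub>R Mn (Suc j) (\<lambda>hs. f (P xs j hs))) \<le> B"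
          by (simp del: Mn.simps)
      qed
      finally show "norm (sop f xs) \<le> real (Suc n') * B" using xs by (simp add: tuples_def)
    qed
    have eqv: "\<forall>g\<in>carrier G. \<forall>xs\<in>tuples G (Suc n'). sop f (map (\<lambda>x. g \<otimes>\<^bsub>G\<^esub> x) xs) = \<pi> g (sop f xs)"
    proof (intro ballI)
      fix g xs assume gG: "g \<in> carrier G" and xs: "xs \<in> tuples G (Suc n')"
      have lx: "length xs = n" and sx: "set xs \<subseteq> carrier G" using xs Suc by (auto simp: tuples_def)
      have pg: "linear (\<pi> g)" "\<And>y. norm (\<pi> g y) = norm y" using pl gG by auto
      have pdg: "\<And>v. \<exists>u. \<forall>y. blinfun_apply (\<pi> g y) v = blinfun_apply y u" using pd gG by auto
      have bdj: "bdL (Suc j) (\<lambda>hs. f (P xs j hs)) B" if j: "j < length xs" for j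
        unfolding bdL_def
      proof (intro allI impI)
        fix hs :: "'g list" assume hs: "length hs = Suc j \<and> set hs \<subseteq> H"
        show "norm (f (P xs j hs)) \<le> B"
          using fB hs j lx sx length_P[of j xs hs] set_P[of xs hs j] by auto
      qed
      have "\<pi> g (sop f xs) = (\<Sum>j<length xs. ((-1::real) ^ j) *\<^sub>R \<pi> g (Mn (Suc j) (\<lambda>hs. f (P xs j hs))))"
        unfolding sop_def using pg(1) by (simp add: linear_sum linear_cmul)
      also have "\<dots> = (\<Sum>j<length xs. ((-1::real) ^ j) *\<^sub>R Mn (Suc j) (\<lambda>hs. f (P (map (\<lambda>x. g \<otimes>\<^bsub>G\<^esub> x) xs) j hs)))"
      proof (rule sum.cong[OF refl])
        fix j assume j: "j \<in> {..<length xs}"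
        have "\<pi> g (Mn (Suc j) (\<lambda>hs. f (P xs j hs))) = Mn (Suc j) (\<lambda>hs. \<pi> g (f (P xs j hs)))"
          using j by (intro Mn_pi[OF bdj pg(2) pdg]) auto
        also have "\<dots> = Mn (Suc j) (\<lambda>hs. f (P (map (\<lambda>x. g \<otimes>\<^bsub>G\<^esub> x) xs) j hs))"
        proof (rule Mn_cong, intro allI impI)
          fix hs :: "'g list" assume hs: "length hs = Suc j \<and> set hs \<subseteq> H"
          have "\<pi> g (f (P xs j hs)) = f (map (\<lambda>x. g \<otimes>\<^bsub>G\<^esub> x) (P xs j hs))"
            using feq[OF gG, of "P xs j hs"] hs j lx sx length_P[of j xs hs] set_P[of xs hs j] by auto
          also have "\<dots> = f (P (map (\<lambda>x. g \<otimes>\<^bsub>G\<^esub> x) xs) j hs)"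
            using map_P[OF gG sx] hs by simp
          finally show "\<pi> g (f (P xs j hs)) = f (P (map (\<lambda>x. g \<otimes>\<^bsub>G\<^esub> x) xs) j hs)" .
        qed
        finally show "((-1::real) ^ j) *\<^sub>R \<pi> g (Mn (Suc j) (\<lambda>hs. f (P xs j hs))) =
            ((-1::real) ^ j) *\<^sub>R Mn (Suc j) (\<lambda>hs. f (P (map (\<lambda>x. g \<otimes>\<^bsub>G\<^esub> x) xs) j hs))" by simp
      qed
      also have "\<dots> = sop f (map (\<lambda>x. g \<otimes>\<^bsub>G\<^esub> x) xs)" by (simp add: sop_def)
      finally show "sop f (map (\<lambda>x. g \<otimes>\<^bsub>G\<^esub> x) xs) = \<pi> g (sop f xs)" by simp
    qed
    have "bcochain G \<pi> (n - 1) (sop f)"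
      unfolding bcochain_def using bd eqv Suc by simp
    moreover have "\<forall>xs\<in>tuples G (Suc n). f xs = coboundary (sop f) xs"
      using key by (simp add: tuples_def)
    ultimately show ?thesis using Suc by auto
  qed
qed

end

theorem proposition3p2:
  fixes G :: "('g, 'b) monoid_scheme"
  assumes "group G"
    and "\<exists>H. normalish G H \<and> amenable_subgroup G H"
  shows "\<forall>(\<pi> :: 'g \<Rightarrow> ('f::banach \<Rightarrow>\<^sub>L real) \<Rightarrow> ('f \<Rightarrow>\<^sub>L real)).
           coefficient_module G \<pi> \<and> mixing G \<pi> \<longrightarrow> (\<forall>n. bounded_cohomology_trivial G \<pi> n)"
proof (rule allI, rule impI)
  fix \<pi> :: "'g \<Rightarrow> ('f::banach \<Rightarrow>\<^sub>L real) \<Rightarrow> ('f \<Rightarrow>\<^sub>L real)"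
  assume cm: "coefficient_module G \<pi> \<and> mixing G \<pi>"
  obtain H where nm: "normalish G H" and am: "amenable_subgroup G H" using assms(2) by blast
  obtain m :: "('g \<Rightarrow> real) \<Rightarrow> real" where
    mc: "\<forall>f f'. (\<forall>x\<in>H. f x = f' x) \<longrightarrow> m f = m f'" and
    ml: "\<forall>f g a b. bdd_on H f \<and> bdd_on H g \<longrightarrow> m (\<lambda>x. a * f x + b * g x) = a * m f + b * m g" and
    mp: "\<forall>f. bdd_on H f \<and> (\<forall>x\<in>H. f x \<ge> 0) \<longrightarrow> m f \<ge> 0" and
    m1: "m (\<lambda>_. 1) = 1" and
    mi: "\<forall>f h. bdd_on H f \<and> h \<in> H \<longrightarrow> m (\<lambda>x. f (h \<otimes>\<^bsub>G\<^esub> x)) = m f"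
    using am unfolding amenable_subgroup_def by blast
  have sub: "subgroup H G" using am unfolding amenable_subgroup_def by blast
  interpret amen G H m
  proof (rule amen.intro)
    show "group G" by (rule assms(1))
    show "subgroup H G" by (rule sub)
    show "m f = m f'" if "\<forall>x\<in>H. f x = f' x" for f f' using mc that by blast
    show "m (\<lambda>x. a * f x + b * g x) = a * m f + b * m g" if "bdd_on H f" "bdd_on H g" for f g a b
      using ml that by blast
    show "m f \<ge> 0" if "bdd_on H f" "\<forall>x\<in>H. f x \<ge> 0" for f using mp that by blast
    show "m (\<lambda>_. 1) = 1" by (rule m1)
    show "m (\<lambda>x. f (h \<otimes>\<^bsub>G\<^esub> x)) = m f" if "bdd_on H f" "h \<in> H" for f h using mi that by blast
  qed
  have pl: "\<forall>s\<in>carrier G. linear (\<pi> s) \<and> (\<forall>y. norm (\<pi> s y) = norm y)"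
    using cm unfolding coefficient_module_def by blast
  have pd: "\<forall>s\<in>carrier G. \<forall>v. \<exists>u. \<forall>y. blinfun_apply (\<pi> s y) v = blinfun_apply y u"
  proof (intro ballI allI)
    fix s v assume s: "s \<in> carrier G"
    have "linear (\<pi> s)" "continuous_map weak_star_topology weak_star_topology (\<pi> s)"
      using cm s unfolding coefficient_module_def by blast+
    then show "\<exists>u. \<forall>y. blinfun_apply (\<pi> s y) v = blinfun_apply y u" by (rule predual)
  qed
  show "\<forall>n. bounded_cohomology_trivial G \<pi> n"
    using main_amen[OF pl pd _ nm] cm by simp
qed

end
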